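(* If $T$ is a tree, then $\gamma(T)=\nu_2(T)$.
   Context: A tree is a simple connected graph without cycles. For a graph $G$ with vertex set $V$, let $X_G=\{x_u\mid u\in V\}$ be indeterminates and $L(G,X_G)$ the matrix with $L_{u,u}=x_u$ and $L_{u,v}=-m_{uv}$ ($u\neq v$), $m_{uv}$ the number of edges between $u$ and $v$. The $j$-critical ideal $I_j(G,X_G)\subseteq\mathbb{Z}[X_G]$ is generated by all $j\times j$ minors of $L(G,X_G)$. The algebraic co-rank is $\gamma(G)=\max\{j\mid I_j(G,X_G)=\mathbb{Z}[X_G]\}$ (taken to be $0$ if there is no such $j$). A $2$-matching of $G$ is a set of edges such that every vertex is incident to at most two of them; $\nu_2(G)$ is the maximum number of edges in a $2$-matching of $G$. *)

theory Defs
  imports "HOL-Library.Poly_Mapping" "HOL-Combinatorics.Permutations"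
begin

text \<open>Graphs: vertex set = the finite type 'v; edges = a set of 2-element vertex sets.\<close>

definition simple_graph :: "'v set set \<Rightarrow> bool" where
  "simple_graph E \<longleftrightarrow> (\<forall>e\<in>E. card e = 2)"

definition adj :: "'v set set \<Rightarrow> 'v \<Rightarrow> 'v \<Rightarrow> bool" where
  "adj E u v \<longleftrightarrow> {u, v} \<in> E"

definition connected_graph :: "'v set set \<Rightarrow> bool" where
  "connected_graph E \<longleftrightarrow> (\<forall>u v. (u, v) \<in> {(a, b). adj E a b}\<^sup>*)"

definition is_cycle :: "'v set set \<Rightarrow> 'v list \<Rightarrow> bool" where
  "is_cycle E xs \<longleftrightarrow> length xs \<ge> 3 \<and> distinct xs \<and>
     (\<forall>i < length xs. adj E (xs ! i) (xs ! ((i + 1) mod length xs)))"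

definition is_tree :: "'v set set \<Rightarrow> bool" where
  "is_tree E \<longleftrightarrow> simple_graph E \<and> connected_graph E \<and> (\<nexists>xs. is_cycle E xs)"

text \<open>Integer polynomials in the variables x_v (v a vertex): Z[X_G].\<close>
type_synonym 'v zpoly = "('v \<Rightarrow>\<^sub>0 nat) \<Rightarrow>\<^sub>0 int"

definition var :: "'v \<Rightarrow> 'v zpoly" where
  "var v = Poly_Mapping.single (Poly_Mapping.single v 1) 1"

text \<open>Generalized Laplacian L(G,X_G); for a simple graph m_uv = 1 iff uv is an edge.\<close>
definition gen_laplacian :: "'v set set \<Rightarrow> 'v \<Rightarrow> 'v \<Rightarrow> 'v zpoly" where
  "gen_laplacian E u v = (if u = v then var u else - (if {u, v} \<in> E then 1 else 0))"

definition minor :: "('v::linorder \<Rightarrow> 'v \<Rightarrow> 'r::comm_ring_1) \<Rightarrow> 'v set \<Rightarrow> 'v set \<Rightarrow> 'r" where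
  "minor L R C = (let rs = sorted_list_of_set R; cs = sorted_list_of_set C; j = card R in
     (\<Sum>p\<in>{p. p permutes {..<j}}. of_int (sign p) * (\<Prod>i<j. L (rs ! i) (cs ! (p i)))))"

definition minors :: "('v::{finite,linorder} \<Rightarrow> 'v \<Rightarrow> 'r::comm_ring_1) \<Rightarrow> nat \<Rightarrow> 'r set" where
  "minors L j = {minor L R C | R C. card R = j \<and> card C = j}"

definition ideal_gen :: "'r::comm_ring_1 set \<Rightarrow> 'r set" where
  "ideal_gen S = {p. \<exists>F c. finite F \<and> F \<subseteq> S \<and> p = (\<Sum>g\<in>F. c g * g)}"

definition critical_ideal :: "'v::{finite,linorder} set set \<Rightarrow> nat \<Rightarrow> 'v zpoly set" where
  "critical_ideal E j = ideal_gen (minors (gen_laplacian E) j)"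

definition algebraic_corank :: "'v::{finite,linorder} set set \<Rightarrow> nat" where
  "algebraic_corank E = (GREATEST j. critical_ideal E j = UNIV)"

definition two_matching :: "'v set set \<Rightarrow> 'v set set \<Rightarrow> bool" where
  "two_matching E M \<longleftrightarrow> M \<subseteq> E \<and> (\<forall>v. card {e \<in> M. v \<in> e} \<le> 2)"

definition nu2 :: "'v::finite set set \<Rightarrow> nat" where
  "nu2 E = Max (card ` {M. two_matching E M})"

end

theory Submission
  imports Defs "Jordan_Normal_Form.Determinant"
begin

section \<open>Evaluation homomorphism\<close>

definition monoval :: "('v::finite \<Rightarrow> int) \<Rightarrow> ('v \<Rightarrow>\<^sub>0 nat) \<Rightarrow> int" where
  "monoval a m = (\<Prod>v\<in>UNIV. a v ^ Poly_Mapping.lookup m v)"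

definition evalp :: "('v::finite \<Rightarrow> int) \<Rightarrow> 'v zpoly \<Rightarrow> int" where
  "evalp a p = (\<Sum>m\<in>Poly_Mapping.keys p. Poly_Mapping.lookup p m * monoval a m)"

lemma evalp_sub:
  assumes "finite S" "Poly_Mapping.keys p \<subseteq> S"
  shows "evalp a p = (\<Sum>m\<in>S. Poly_Mapping.lookup p m * monoval a m)"
  unfolding evalp_def
  by (rule sum.mono_neutral_left) (use assms in \<open>auto simp: in_keys_iff\<close>)

lemma evalp_add: "evalp a (p + q) = evalp a p + evalp a q"
proof -
  let ?S = "Poly_Mapping.keys p \<union> Poly_Mapping.keys q"
  have "evalp a (p + q) = (\<Sum>m\<in>?S. Poly_Mapping.lookup (p+q) m * monoval a m)"
    by (rule evalp_sub) (auto simp: keys_add dest: set_mp[OF keys_add])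
  also have "\<dots> = (\<Sum>m\<in>?S. Poly_Mapping.lookup p m * monoval a m) + (\<Sum>m\<in>?S. Poly_Mapping.lookup q m * monoval a m)"
    by (simp add: lookup_add sum.distrib ring_distribs)
  also have "\<dots> = evalp a p + evalp a q"
    by (simp add: evalp_sub[symmetric])
  finally show ?thesis .
qed

lemma evalp_zero[simp]: "evalp a 0 = 0"
  by (simp add: evalp_def)

lemma evalp_sum: "evalp a (sum f A) = (\<Sum>x\<in>A. evalp a (f x))"
  by (induction A rule: infinite_finite_induct) (auto simp: evalp_add)

lemma evalp_single[simp]: "evalp a (Poly_Mapping.single m c) = c * monoval a m"
  by (simp add: evalp_def)

lemma poly_expand: "p = (\<Sum>m\<in>Poly_Mapping.keys p. Poly_Mapping.single m (Poly_Mapping.lookup p m))"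
proof (rule poly_mapping_eqI)
  fix k
  have "Poly_Mapping.lookup (\<Sum>m\<in>Poly_Mapping.keys p. Poly_Mapping.single m (Poly_Mapping.lookup p m)) k
      = (\<Sum>m\<in>Poly_Mapping.keys p. if m = k then Poly_Mapping.lookup p m else 0)"
    by (simp add: lookup_sum lookup_single when_def)
  also have "\<dots> = Poly_Mapping.lookup p k"
    by (simp add: in_keys_iff)
  finally show "Poly_Mapping.lookup p k = Poly_Mapping.lookup (\<Sum>m\<in>Poly_Mapping.keys p. Poly_Mapping.single m (Poly_Mapping.lookup p m)) k" by simp
qed

lemma mono_add: "monoval a (k + l) = monoval a k * monoval a l"
  by (simp add: monoval_def lookup_add power_add prod.distrib)

lemma mono_zero[simp]: "monoval a 0 = 1"
  by (simp add: monoval_def)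

lemma evalp_mult: "evalp a (p * q) = evalp a p * evalp a q"
proof -
  have "p * q = (\<Sum>k\<in>Poly_Mapping.keys p. Poly_Mapping.single k (Poly_Mapping.lookup p k)) * (\<Sum>l\<in>Poly_Mapping.keys q. Poly_Mapping.single l (Poly_Mapping.lookup q l))"
    by (simp flip: poly_expand)
  also have "\<dots> = (\<Sum>k\<in>Poly_Mapping.keys p. \<Sum>l\<in>Poly_Mapping.keys q. Poly_Mapping.single (k + l) (Poly_Mapping.lookup p k * Poly_Mapping.lookup q l))"
    by (simp add: sum_distrib_left sum_distrib_right mult_single) (rule sum.swap)
  finally have "evalp a (p * q) = (\<Sum>k\<in>Poly_Mapping.keys p. \<Sum>l\<in>Poly_Mapping.keys q. Poly_Mapping.lookup p k * Poly_Mapping.lookup q l * monoval a (k + l))"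
    by (simp add: evalp_sum)
  also have "\<dots> = (\<Sum>k\<in>Poly_Mapping.keys p. Poly_Mapping.lookup p k * monoval a k) * (\<Sum>l\<in>Poly_Mapping.keys q. Poly_Mapping.lookup q l * monoval a l)"
    by (simp add: mono_add sum_distrib_left sum_distrib_right mult_ac) (subst sum.swap, simp add: mult_ac)
  finally show ?thesis by (simp add: evalp_def)
qed

lemma evalp_one[simp]: "evalp a 1 = 1"
  using evalp_single[of a 0 1] by (simp del: evalp_single)

lemma evalp_uminus: "evalp a (- p) = - evalp a p"
  using evalp_add[of a p "-p"] by simp

lemma evalp_of_int[simp]: "evalp a (of_int z) = z"
  using evalp_single[of a 0 z] by (simp add: single_of_int[symmetric] del: evalp_single single_of_int)

lemma evalp_prod: "evalp a (prod f A) = (\<Prod>x\<in>A. evalp a (f x))"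
  by (induction A rule: infinite_finite_induct) (auto simp: evalp_mult)

lemma evalp_var[simp]: "evalp a (var v) = a v"
proof -
  have "monoval a (Poly_Mapping.single v 1) = (\<Prod>u\<in>UNIV. if v = u then a u else 1)"
    unfolding monoval_def by (intro prod.cong) (auto simp: lookup_single when_def)
  then show ?thesis by (simp add: var_def)
qed


lemma evalp_minor:
  "evalp a (minor L R C) = minor (\<lambda>u v. evalp a (L u v)) R C"
  unfolding minor_def Let_def
  by (simp add: evalp_sum evalp_mult evalp_prod)

lemma minor_det:
  fixes A :: "'v::linorder \<Rightarrow> 'v \<Rightarrow> 'r::comm_ring_1"
  assumes "card R = j"
  shows "minor A R C = det (mat j j (\<lambda>(i,l). A (sorted_list_of_set R ! i) (sorted_list_of_set C ! l)))"
  unfolding minor_def Let_def assms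
  by (subst det_def'[of _ j]) (auto simp: atLeast0LessThan intro!: sum.cong prod.cong)

lemma minor_lowrank:
  fixes A :: "'v::linorder \<Rightarrow> 'v \<Rightarrow> 'r::comm_ring_1"
  assumes A: "\<And>u v. A u v = (\<Sum>t<K. b t u * c t v)" and "card R = j" and "K < j"
  shows "minor A R C = 0"
proof -
  define rs where "rs = sorted_list_of_set R"
  define cs where "cs = sorted_list_of_set C"
  define M where "M = mat j j (\<lambda>(i,l). A (rs!i) (cs!l))"
  have 1: "minor A R C = det M" unfolding M_def rs_def cs_def by (rule minor_det[OF assms(2)])
  define B where "B = mat j j (\<lambda>(i,t). if t < K then b t (rs!i) else 0)"
  define D where "D = mat j j (\<lambda>(t,l). if t < K then c t (cs!l) else 0)"
  have B: "B \<in> carrier_mat j j" and D: "D \<in> carrier_mat j j" by (auto simp: B_def D_def)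
  have "M = B * D"
  proof (rule eq_matI)
    fix i l assume il: "i < dim_row (B * D)" "l < dim_col (B * D)"
    then have ij: "i < j" "l < j" using B D by auto
    have "(B * D) $$ (i, l) = (\<Sum>t\<in>{0..<j}. B $$ (i,t) * D $$ (t,l))"
      using il B D by (simp add: scalar_prod_def)
    also have "\<dots> = (\<Sum>t\<in>{0..<j}. if t < K then b t (rs!i) * c t (cs!l) else 0)"
      using ij by (intro sum.cong) (auto simp: B_def D_def)
    also have "\<dots> = (\<Sum>t\<in>{t\<in>{0..<j}. t < K}. b t (rs!i) * c t (cs!l))"
      by (rule sum.inter_filter[symmetric]) simp
    also have "{t\<in>{0..<j}. t < K} = {..<K}" using assms(3) by auto
    finally show "M $$ (i, l) = (B * D) $$ (i, l)"
      using ij by (simp add: M_def A)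
  qed (use B D in \<open>auto simp: M_def\<close>)
  have "det B = det (transpose_mat B)" using B by (simp add: det_transpose)
  also have "\<dots> = 0"
  proof -
    have "transpose_mat B \<in> carrier_mat j j" using B by simp
    moreover have "(\<Prod>i = 0..<j. transpose_mat B $$ (i, p i)) = 0" if "p permutes {0..<j}" for p
    proof (rule prod_zero)
      have "p K < j" using permutes_in_image[OF that] assms(3) by auto
      then show "\<exists>i\<in>{0..<j}. transpose_mat B $$ (i, p i) = 0"
        using assms(3) by (intro bexI[of _ K]) (auto simp: B_def)
    qed simp
    ultimately show ?thesis by (simp add: det_def')
  qed
  finally show ?thesis using 1 \<open>M = B * D\<close> det_mult[OF B D] by simp
qed


definition idx :: "'a list \<Rightarrow> 'a \<Rightarrow> nat" where
  "idx xs x = (THE i. i < length xs \<and> xs ! i = x)"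

lemma idx_props:
  assumes "distinct xs" "x \<in> set xs"
  shows "idx xs x < length xs" "xs ! idx xs x = x"
proof -
  obtain i where i: "i < length xs" "xs ! i = x" using assms(2) by (auto simp: in_set_conv_nth)
  have "idx xs x = i" unfolding idx_def
    by (rule the_equality) (use i assms(1) in \<open>auto simp: nth_eq_iff_index_eq\<close>)
  then show "idx xs x < length xs" "xs ! idx xs x = x" using i by auto
qed

lemma inj_le_id_sum:
  fixes h g :: "nat \<Rightarrow> nat"
  assumes "inj_on h {..<j}" "h ` {..<j} \<subseteq> {..<j}" "inj_on g {..<j}" "g ` {..<j} \<subseteq> {..<j}"
    and "\<And>i. i < j \<Longrightarrow> h i \<le> g i" and "i < j"
  shows "h i = g i"
proof -
  have hi: "h ` {..<j} = {..<j}" using assms(1,2) by (simp add: endo_inj_surj)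
  have gi: "g ` {..<j} = {..<j}" using assms(3,4) by (simp add: endo_inj_surj)
  have "sum h {..<j} = sum id {..<j}"
    using sum.reindex[OF assms(1), of id] hi by simp
  moreover have "sum g {..<j} = sum id {..<j}"
    using sum.reindex[OF assms(3), of id] gi by simp
  ultimately have "sum h {..<j} = sum g {..<j}" by simp
  then show ?thesis using sum_mono_inv[of h "{..<j}" g i] assms(5,6) by auto
qed

lemma minor_triangular:
  fixes L :: "'v::linorder \<Rightarrow> 'v \<Rightarrow> 'r::comm_ring_1"
  assumes drl: "distinct rl" and dcl: "distinct cl" and lrl: "length rl = j" and lcl: "length cl = j"
    and zero: "\<And>a b. a < j \<Longrightarrow> b < j \<Longrightarrow> a < b \<Longrightarrow> L (rl!a) (cl!b) = 0"
    and diag: "\<And>a. a < j \<Longrightarrow> L (rl!a) (cl!a) = d"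
  shows "\<exists>s::int. (s = 1 \<or> s = -1) \<and> minor L (set rl) (set cl) = of_int s * d ^ j"
proof -
  define rs where "rs = sorted_list_of_set (set rl)"
  define cs where "cs = sorted_list_of_set (set cl)"
  have cR: "card (set rl) = j" using drl lrl by (simp add: distinct_card)
  have cC: "card (set cl) = j" using dcl lcl by (simp add: distinct_card)
  have rs: "distinct rs" "length rs = j" "set rs = set rl" using cR by (auto simp: rs_def)
  have cs: "distinct cs" "length cs = j" "set cs = set cl" using cC by (auto simp: cs_def)
  define \<alpha> where "\<alpha> i = idx rl (rs!i)" for i
  have \<alpha>: "\<alpha> i < j" "rl ! \<alpha> i = rs ! i" if "i < j" for i
    using that rs lrl idx_props[OF drl, of "rs!i"] nth_mem[of i rs] by (auto simp: \<alpha>_def)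
  have \<alpha>inj: "inj_on \<alpha> {..<j}"
  proof (rule inj_onI)
    fix x y assume "x \<in> {..<j}" "y \<in> {..<j}" "\<alpha> x = \<alpha> y"
    then have "rs ! x = rs ! y" using \<alpha> by (metis lessThan_iff)
    then show "x = y" using rs \<open>x \<in> {..<j}\<close> \<open>y \<in> {..<j}\<close> by (simp add: nth_eq_iff_index_eq)
  qed
  define p0 where "p0 i = (if i < j then idx cs (cl ! \<alpha> i) else i)" for i
  have p0lt: "p0 i < j" and p0cs: "cs ! p0 i = cl ! \<alpha> i" if "i < j" for i
    using that \<alpha>[OF that] cs lcl idx_props[OF cs(1), of "cl ! \<alpha> i"] nth_mem[of "\<alpha> i" cl] by (auto simp: p0_def)
  have p0inj: "inj_on p0 {..<j}"
  proof (rule inj_onI)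
    fix x y assume xy: "x \<in> {..<j}" "y \<in> {..<j}" "p0 x = p0 y"
    then have "cl ! \<alpha> x = cl ! \<alpha> y" using p0cs by (metis lessThan_iff)
    then have "\<alpha> x = \<alpha> y" using dcl lcl \<alpha> xy by (simp add: nth_eq_iff_index_eq)
    then show "x = y" using \<alpha>inj xy by (simp add: inj_on_eq_iff)
  qed
  have p0perm: "p0 permutes {..<j}"
  proof (rule bij_imp_permutes)
    have "p0 ` {..<j} \<subseteq> {..<j}" using p0lt by auto
    then have "p0 ` {..<j} = {..<j}" using p0inj by (simp add: endo_inj_surj)
    then show "bij_betw p0 {..<j} {..<j}" using p0inj by (simp add: bij_betw_def)
  qed (simp add: p0_def)
  have uniq: "p = p0" if p: "p permutes {..<j}" and nz: "(\<Prod>i<j. L (rs ! i) (cs ! p i)) \<noteq> 0" for p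
  proof
    fix i
    show "p i = p0 i"
    proof (cases "i < j")
      case False then show ?thesis using p by (simp add: p0_def permutes_not_in)
    next
      case True
      have pin: "p i < j" if "i < j" for i using permutes_in_image[OF p] that by auto
      define h where "h i = idx cl (cs ! p i)" for i
      have h: "h i < j" "cl ! h i = cs ! p i" if "i < j" for i
        using pin[OF that] cs lcl idx_props[OF dcl, of "cs ! p i"] nth_mem[of "p i" cs] by (auto simp: h_def)
      have hinj: "inj_on h {..<j}"
      proof (rule inj_onI)
        fix x y assume xy: "x \<in> {..<j}" "y \<in> {..<j}" "h x = h y"
        then have "cs ! p x = cs ! p y" using h by (metis lessThan_iff)
        then have "p x = p y" using cs pin xy by (simp add: nth_eq_iff_index_eq)
        then show "x = y" using permutes_inj[OF p] by (simp add: inj_eq)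
      qed
      have le: "h i \<le> \<alpha> i" if "i < j" for i
      proof (rule ccontr)
        assume "\<not> h i \<le> \<alpha> i"
        then have "L (rs ! i) (cs ! p i) = 0"
          using zero[of "\<alpha> i" "h i"] h[OF that] \<alpha>[OF that] by simp
        then have "(\<Prod>i<j. L (rs ! i) (cs ! p i)) = 0"
          using that by (intro prod_zero) auto
        then show False using nz by simp
      qed
      have "h i = \<alpha> i"
        by (rule inj_le_id_sum[OF hinj _ \<alpha>inj]) (use h \<alpha> le True in auto)
      then have "cs ! p i = cl ! \<alpha> i" using h[OF True] by simp
      then have "cs ! p i = cs ! p0 i" using p0cs[OF True] by simp
      then show ?thesis using cs pin[OF True] p0lt[OF True] by (simp add: nth_eq_iff_index_eq)
    qed
  qed
  have "minor L (set rl) (set cl) =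
      (\<Sum>p\<in>{p. p permutes {..<j}}. of_int (sign p) * (\<Prod>i<j. L (rs ! i) (cs ! p i)))"
    unfolding minor_def Let_def rs_def cs_def cR ..
  also have "\<dots> = of_int (sign p0) * (\<Prod>i<j. L (rs ! i) (cs ! p0 i))"
  proof -
    have "(\<Sum>p\<in>{p. p permutes {..<j}}. of_int (sign p) * (\<Prod>i<j. L (rs ! i) (cs ! p i)))
        = (\<Sum>p\<in>{p0}. of_int (sign p) * (\<Prod>i<j. L (rs ! i) (cs ! p i)))"
      by (rule sum.mono_neutral_right) (use p0perm uniq in \<open>auto simp: finite_permutations, fastforce\<close>)
    then show ?thesis by simp
  qed
  also have "(\<Prod>i<j. L (rs ! i) (cs ! p0 i)) = (\<Prod>i<j. d)"
    by (intro prod.cong refl) (metis \<alpha> diag lessThan_iff p0cs)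
  finally show ?thesis by (intro exI[of _ "sign p0"]) (auto simp: sign_def)
qed


definition nbrs :: "'v set set \<Rightarrow> 'v \<Rightarrow> 'v set" where
  "nbrs E v = {u. {v, u} \<in> E}"

fun pth :: "'v set set \<Rightarrow> 'v list \<Rightarrow> bool" where
  "pth E (x # y # zs) = ({x, y} \<in> E \<and> pth E (y # zs))"
| "pth E _ = True"

lemma pth_prefix: "pth E (xs @ ys) \<Longrightarrow> pth E xs"
  by (induction E xs rule: pth.induct) auto

lemma pth_nth: "pth E xs \<Longrightarrow> Suc i < length xs \<Longrightarrow> {xs ! i, xs ! Suc i} \<in> E"
proof (induction E xs arbitrary: i rule: pth.induct)
  case (1 E x y zs)
  then show ?case by (cases i) auto
qed auto

lemma irrefl_edge: "simple_graph E \<Longrightarrow> {v, v} \<notin> E"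
  by (auto simp: simple_graph_def)

lemma cycle_of_pth:
  assumes "distinct ys" "length ys \<ge> 3" "pth E ys" "{last ys, hd ys} \<in> E"
  shows "is_cycle E ys"
  unfolding is_cycle_def
proof (intro conjI allI impI)
  fix i assume i: "i < length ys"
  show "adj E (ys ! i) (ys ! ((i + 1) mod length ys))"
  proof (cases "Suc i < length ys")
    case True
    then show ?thesis using pth_nth[OF assms(3) True] by (simp add: adj_def)
  next
    case False
    then have i1: "i + 1 = length ys" using i by simp
    have "i = length ys - 1" using i1 by simp
    then have "ys ! i = last ys" using assms(2) by (cases ys rule: rev_cases) (auto simp: nth_append)
    moreover have "ys ! 0 = hd ys" using assms(2) by (cases ys) auto
    ultimately show ?thesis using assms(4) i1 by (simp add: adj_def)
  qed
qed (use assms in auto)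

lemma finite_distinct_lists: "finite {xs :: 'v::finite list. distinct xs \<and> P xs}"
proof (rule finite_subset)
  show "{xs :: 'v list. distinct xs \<and> P xs} \<subseteq> {xs. set xs \<subseteq> UNIV \<and> length xs \<le> card (UNIV :: 'v set)}"
    by (auto simp: distinct_card[symmetric] card_mono)
qed (rule finite_lists_length_le[OF finite_UNIV])

lemma leaf_struct:
  fixes E :: "'v::finite set set"
  assumes sg: "simple_graph E" and ac: "\<nexists>xs. is_cycle E xs" and ne: "E \<noteq> {}"
  shows "(\<exists>l w. nbrs E l = {w} \<and> card (nbrs E w) \<le> 2) \<or>
         (\<exists>l1 l2 w. l1 \<noteq> l2 \<and> nbrs E l1 = {w} \<and> nbrs E l2 = {w})"
proof -
  define P where "P = {xs :: 'v list. distinct xs \<and> pth E xs}"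
  have finP: "finite P" unfolding P_def by (rule finite_distinct_lists)
  obtain e where "e \<in> E" using ne by auto
  then obtain a b where ab: "a \<noteq> b" "{a, b} \<in> E" using sg by (auto simp: simple_graph_def card_2_iff)
  have abP: "[a, b] \<in> P" using ab by (simp add: P_def)
  define m where "m = Max (length ` P)"
  have maxm: "length ys \<le> m" if "ys \<in> P" for ys using finP that by (simp add: m_def)
  obtain xs where xs: "xs \<in> P" "length xs = m"
  proof -
    have "m \<in> length ` P" unfolding m_def using finP abP by (intro Max_in) auto
    then show ?thesis using that by auto
  qed
  have "m \<ge> 2" using maxm[OF abP] by simp
  then obtain v0 v1 rest where xsd: "xs = v0 # v1 # rest"
    using xs(2) by (cases xs; cases "tl xs") auto
  have dxs: "distinct (v0 # v1 # rest)" and pxs: "pth E (v0 # v1 # rest)" using xs(1) xsd by (auto simp: P_def)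
  have e01: "{v0, v1} \<in> E" using pxs by simp
  have irr: "{v, v} \<notin> E" for v using irrefl_edge[OF sg] .
  have leaf0: "nbrs E v0 = {v1}"
  proof (rule ccontr)
    assume "nbrs E v0 \<noteq> {v1}"
    then obtain y where y: "{v0, y} \<in> E" "y \<noteq> v1" using e01 by (auto simp: nbrs_def)
    have "y \<noteq> v0" using y irr by auto
    show False
    proof (cases "y \<in> set rest")
      case True
      then obtain as bs where rest: "rest = as @ y # bs" by (meson split_list)
      let ?ys = "v0 # v1 # as @ [y]"
      have "is_cycle E ?ys"
      proof (rule cycle_of_pth)
        show "distinct ?ys" using dxs rest by auto
        show "pth E ?ys" using pxs rest pth_prefix[of E "v0 # v1 # as @ [y]" bs] by simp
        show "{last ?ys, hd ?ys} \<in> E" using y by (simp add: insert_commute)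
      qed simp
      then show False using ac by blast
    next
      case False
      then have "y # xs \<in> P" using dxs pxs xsd y \<open>y \<noteq> v0\<close> by (auto simp: P_def insert_commute)
      then show False using maxm xs(2) by fastforce
    qed
  qed
  show ?thesis
  proof (cases "card (nbrs E v1) \<le> 2")
    case True
    then show ?thesis using leaf0 by blast
  next
    case False
    have "card {v0, hd rest} \<le> 2" by (simp add: card_insert_le_m1)
    then have "\<not> nbrs E v1 \<subseteq> {v0, hd rest}" using False card_mono[of "{v0, hd rest}" "nbrs E v1"] by auto
    then have "nbrs E v1 - {v0, hd rest} \<noteq> {}" by auto
    then obtain x where x: "{v1, x} \<in> E" "x \<noteq> v0" "x \<noteq> hd rest" by (auto simp: nbrs_def)
    have "x \<noteq> v1" using x irr by auto
    have xnot: "x \<notin> set rest"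
    proof
      assume "x \<in> set rest"
      then obtain as bs where rest: "rest = as @ x # bs" by (meson split_list)
      have "as \<noteq> []" using rest x(3) by auto
      let ?ys = "v1 # as @ [x]"
      have "is_cycle E ?ys"
      proof (rule cycle_of_pth)
        show "distinct ?ys" using dxs rest by auto
        show "pth E ?ys" using pxs rest pth_prefix[of E "v1 # as @ [x]" bs] by (cases as) auto
        show "{last ?ys, hd ?ys} \<in> E" using x by (simp add: insert_commute)
        show "3 \<le> length ?ys" using \<open>as \<noteq> []\<close> by (cases as) auto
      qed
      then show False using ac by blast
    qed
    have leafx: "nbrs E x = {v1}"
    proof (rule ccontr)
      assume "nbrs E x \<noteq> {v1}"
      then obtain y where y: "{x, y} \<in> E" "y \<noteq> v1" using x(1) by (auto simp: nbrs_def insert_commute)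
      have "y \<noteq> x" using y irr by auto
      have "y \<noteq> v0"
      proof
        assume "y = v0"
        then have "x \<in> nbrs E v0" using y by (auto simp: nbrs_def insert_commute)
        then show False using leaf0 \<open>x \<noteq> v1\<close> by auto
      qed
      show False
      proof (cases "y \<in> set rest")
        case True
        then obtain as bs where rest: "rest = as @ y # bs" by (meson split_list)
        let ?ys = "x # v1 # as @ [y]"
        have "is_cycle E ?ys"
        proof (rule cycle_of_pth)
          show "distinct ?ys" using dxs rest xnot \<open>x \<noteq> v1\<close> \<open>y \<noteq> x\<close> by auto
          show "pth E ?ys" using pxs rest pth_prefix[of E "v1 # as @ [y]" bs] x(1)
            by (auto simp: insert_commute)
          show "{last ?ys, hd ?ys} \<in> E" using y by (simp add: insert_commute)
        qed simp
        then show False using ac by blast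
      next
        case False
        have "y # x # v1 # rest \<in> P" using dxs pxs False xnot \<open>x \<noteq> v1\<close> \<open>y \<noteq> x\<close> \<open>y \<noteq> v1\<close> y x(1)
          by (auto simp: P_def insert_commute)
        then show False using maxm xs xsd by fastforce
      qed
    qed
    show ?thesis using leaf0 leafx x(2) by blast
  qed
qed


fun good :: "'v set set \<Rightarrow> ('v \<times> 'v) list \<Rightarrow> bool" where
  "good E [] = True"
| "good E (p # s) = ({fst p, snd p} \<in> E \<and> fst p \<notin> fst ` set s \<and>
      (\<forall>q\<in>set s. snd q \<noteq> fst p \<and> {fst p, snd q} \<notin> E) \<and> good E s)"

lemma good_snoc: "good E (s @ [q]) \<longleftrightarrow> good E s \<and> {fst q, snd q} \<in> E \<and> fst q \<notin> fst ` set s \<and>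
   (\<forall>p\<in>set s. snd q \<noteq> fst p \<and> {fst p, snd q} \<notin> E)"
  by (induction s) auto

lemma good_edge: "good E s \<Longrightarrow> x \<in> set s \<Longrightarrow> {fst x, snd x} \<in> E"
  by (induction s) auto

lemma good_pair: "good E s \<Longrightarrow> x \<in> set s \<Longrightarrow> y \<in> set s \<Longrightarrow> x \<noteq> y \<Longrightarrow>
   (snd y \<noteq> fst x \<and> {fst x, snd y} \<notin> E) \<or> (snd x \<noteq> fst y \<and> {fst y, snd x} \<notin> E)"
  by (induction s) auto

lemma good_ext: "good E' s \<Longrightarrow> E' \<subseteq> E \<Longrightarrow>
   (\<And>x y. x \<in> set s \<Longrightarrow> y \<in> set s \<Longrightarrow> {fst x, snd y} \<in> E \<Longrightarrow> {fst x, snd y} \<in> E') \<Longrightarrow> good E s"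
proof (induction s)
  case (Cons p s)
  have "good E s" by (rule Cons.IH) (use Cons.prems in auto)
  moreover have "snd q \<noteq> fst p \<and> {fst p, snd q} \<notin> E" if "q \<in> set s" for q
    using Cons.prems(1) Cons.prems(3)[of p q] that by auto
  ultimately show ?case using Cons.prems(1,2) by auto
qed simp

definition Kval :: "'v set set \<Rightarrow> 'v set \<Rightarrow> nat" where
  "Kval E Q = 2 * card Q + card {e\<in>E. e \<inter> Q = {}}"

lemma cycle_mono: "is_cycle E' xs \<Longrightarrow> E' \<subseteq> E \<Longrightarrow> is_cycle E xs"
  by (auto simp: is_cycle_def adj_def)

lemma simple_mono: "simple_graph E \<Longrightarrow> E' \<subseteq> E \<Longrightarrow> simple_graph E'"
  by (auto simp: simple_graph_def)

lemma leaf_edge: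
  assumes "simple_graph E" "nbrs E l = {w}" "e \<in> E" "l \<in> e"
  shows "e = {l, w}"
proof -
  obtain a b where ab: "e = {a, b}" "a \<noteq> b" using assms(1,3) by (auto simp: simple_graph_def card_2_iff)
  then have "\<exists>u. e = {l, u}" using assms(4) by auto
  then obtain u where "e = {l, u}" by blast
  then have "u \<in> nbrs E l" using assms(3) by (simp add: nbrs_def)
  then show ?thesis using assms(2) \<open>e = {l, u}\<close> by auto
qed

lemma comb:
  fixes E :: "'v::finite set set"
  assumes "simple_graph E" "\<nexists>xs. is_cycle E xs"
  shows "\<exists>s Q. good E s \<and> Kval E Q \<le> length s"
  using assms
proof (induction "card E" arbitrary: E rule: less_induct)
  case less
  have sg: "simple_graph E" and ac: "\<nexists>xs. is_cycle E xs" by fact+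
  have irr: "{v, v} \<notin> E" for v using irrefl_edge[OF sg] .
  show ?case
  proof (cases "E = {}")
    case True
    then show ?thesis by (intro exI[of _ "[]"] exI[of _ "{}"]) (simp add: Kval_def)
  next
    case False
    from leaf_struct[OF sg ac False] show ?thesis
    proof
      assume "\<exists>l w. nbrs E l = {w} \<and> card (nbrs E w) \<le> 2"
      then obtain l w where lw: "nbrs E l = {w}" "card (nbrs E w) \<le> 2" by blast
      have elw: "{l, w} \<in> E" using lw(1) by (auto simp: nbrs_def)
      have "l \<noteq> w" using elw irr by auto
      define E' where "E' = E - {{l, w}}"
      have sub: "E' \<subseteq> E" by (auto simp: E'_def)
      have "card E' < card E" unfolding E'_def by (rule card_Diff1_less) (auto simp: elw)
      moreover have "simple_graph E'" using simple_mono[OF sg sub] .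
      moreover have "\<nexists>xs. is_cycle E' xs" using ac cycle_mono[OF _ sub] by blast
      ultimately obtain s' Q where s': "good E' s'" "Kval E' Q \<le> length s'"
        using less(1) by blast
      have lnot: "l \<notin> e" if "e \<in> E'" for e
        using leaf_edge[OF sg lw(1)] that by (auto simp: E'_def)
      have vs: "fst x \<noteq> l" "snd x \<noteq> l" "{fst x, snd x} \<in> E'" if "x \<in> set s'" for x
        using good_edge[OF s'(1) that] lnot by auto
      have gE: "good E s'"
      proof (rule good_ext[OF s'(1) sub])
        fix x y assume "x \<in> set s'" "y \<in> set s'" "{fst x, snd y} \<in> E"
        then show "{fst x, snd y} \<in> E'" using vs[of x] vs[of y] by (auto simp: E'_def doubleton_eq_iff)
      qed
      have nw: "nbrs E' w \<subseteq> nbrs E w - {l}" using lnot by (auto simp: nbrs_def E'_def)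
      have "l \<in> nbrs E w" using elw by (auto simp: nbrs_def insert_commute)
      then have "card (nbrs E w - {l}) \<le> 1" using lw(2) by simp
      then have cw: "card (nbrs E' w) \<le> 1" using nw card_mono[of "nbrs E w - {l}" "nbrs E' w"] by simp
      have notboth: "\<not> (w \<in> fst ` set s' \<and> w \<in> snd ` set s')"
      proof
        assume "w \<in> fst ` set s' \<and> w \<in> snd ` set s'"
        then obtain x y where xy: "x \<in> set s'" "y \<in> set s'" "fst x = w" "snd y = w" by auto
        have "x \<noteq> y" using xy vs(3)[OF xy(1)] irr sub by auto
        have "snd x \<in> nbrs E' w" using vs(3)[OF xy(1)] xy by (simp add: nbrs_def)
        moreover have "fst y \<in> nbrs E' w" using vs(3)[OF xy(2)] xy by (simp add: nbrs_def insert_commute)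
        ultimately have "snd x = fst y" using cw card_le_Suc0_iff_eq[of "nbrs E' w"] by auto
        then show False using good_pair[OF s'(1) xy(1,2) \<open>x \<noteq> y\<close>] xy by auto
      qed
      have K: "Kval E Q \<le> Kval E' Q + 1"
      proof -
        have "{e\<in>E. e \<inter> Q = {}} \<subseteq> insert {l, w} {e\<in>E'. e \<inter> Q = {}}" by (auto simp: E'_def)
        then have "card {e\<in>E. e \<inter> Q = {}} \<le> card (insert {l, w} {e\<in>E'. e \<inter> Q = {}})"
          by (intro card_mono) auto
        also have "\<dots> \<le> card {e\<in>E'. e \<inter> Q = {}} + 1" by (simp add: card_insert_if)
        finally show ?thesis by (simp add: Kval_def)
      qed
      show ?thesis
      proof (cases "w \<in> snd ` set s'")
        case False
        have "good E ((l, w) # s')"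
        proof -
          have "snd q \<noteq> l \<and> {l, snd q} \<notin> E" if "q \<in> set s'" for q
          proof
            show "snd q \<noteq> l" using vs(2)[OF that] .
            show "{l, snd q} \<notin> E"
            proof
              assume "{l, snd q} \<in> E"
              then have "snd q \<in> nbrs E l" by (simp add: nbrs_def)
              then show False using lw(1) False that by auto
            qed
          qed
          then show ?thesis using elw gE vs by auto
        qed
        then show ?thesis using s'(2) K by (intro exI[of _ "(l, w) # s'"] exI[of _ Q]) simp
      next
        case True
        then have wr: "w \<notin> fst ` set s'" using notboth by blast
        have "good E (s' @ [(w, l)])"
          unfolding good_snoc
        proof (intro conjI ballI)
          show "{fst (w, l), snd (w, l)} \<in> E" using elw by (simp add: insert_commute)
          show "fst (w, l) \<notin> fst ` set s'" using wr by simp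
          fix p assume p: "p \<in> set s'"
          show "snd (w, l) \<noteq> fst p" using vs(1)[OF p] by simp
          show "{fst p, snd (w, l)} \<notin> E"
          proof
            assume "{fst p, snd (w, l)} \<in> E"
            then have "fst p \<in> nbrs E l" by (simp add: nbrs_def insert_commute)
            then show False using lw(1) wr p by auto
          qed
        qed (rule gE)
        then show ?thesis using s'(2) K by (intro exI[of _ "s' @ [(w, l)]"] exI[of _ Q]) simp
      qed
    next
      assume "\<exists>l1 l2 w. l1 \<noteq> l2 \<and> nbrs E l1 = {w} \<and> nbrs E l2 = {w}"
      then obtain l1 l2 w where lw: "l1 \<noteq> l2" "nbrs E l1 = {w}" "nbrs E l2 = {w}" by blast
      have e1: "{l1, w} \<in> E" using lw(2) by (auto simp: nbrs_def)
      have e2: "{l2, w} \<in> E" using lw(3) by (auto simp: nbrs_def)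
      have "l1 \<noteq> w" "l2 \<noteq> w" using e1 e2 irr by auto
      define E' where "E' = {e\<in>E. w \<notin> e}"
      have sub: "E' \<subseteq> E" by (auto simp: E'_def)
      have "card E' < card E" unfolding E'_def
        by (rule psubset_card_mono) (use e1 in auto)
      moreover have "simple_graph E'" using simple_mono[OF sg sub] .
      moreover have "\<nexists>xs. is_cycle E' xs" using ac cycle_mono[OF _ sub] by blast
      ultimately obtain s' Q where s': "good E' s'" "Kval E' Q \<le> length s'"
        using less(1) by blast
      have lnot: "l1 \<notin> e" "l2 \<notin> e" "w \<notin> e" if "e \<in> E'" for e
        using leaf_edge[OF sg lw(2)] leaf_edge[OF sg lw(3)] that by (auto simp: E'_def)
      have vs: "fst x \<noteq> l1" "snd x \<noteq> l1" "fst x \<noteq> l2" "snd x \<noteq> l2" "fst x \<noteq> w" "snd x \<noteq> w"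
        if "x \<in> set s'" for x
        using good_edge[OF s'(1) that] lnot by blast+
      have gE: "good E s'"
      proof (rule good_ext[OF s'(1) sub])
        fix x y assume "x \<in> set s'" "y \<in> set s'" "{fst x, snd y} \<in> E"
        then show "{fst x, snd y} \<in> E'" using vs[of x] vs[of y] by (auto simp: E'_def)
      qed
      have g2: "good E (s' @ [(w, l2)])"
        unfolding good_snoc
      proof (intro conjI ballI)
        show "{fst (w, l2), snd (w, l2)} \<in> E" using e2 by (simp add: insert_commute)
        show "fst (w, l2) \<notin> fst ` set s'" using vs(5) by fastforce
        fix p assume p: "p \<in> set s'"
        show "snd (w, l2) \<noteq> fst p" using vs(3)[OF p] by simp
        show "{fst p, snd (w, l2)} \<notin> E"
        proof
          assume "{fst p, snd (w, l2)} \<in> E"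
          then have "{fst p, l2} = {l2, w}" using leaf_edge[OF sg lw(3)] by auto
          then show False using vs(5)[OF p] \<open>l2 \<noteq> w\<close> by (auto simp: doubleton_eq_iff)
        qed
      qed (rule gE)
      have g3: "good E ((l1, w) # s' @ [(w, l2)])"
      proof -
        have "snd q \<noteq> l1 \<and> {l1, snd q} \<notin> E" if "q \<in> set (s' @ [(w, l2)])" for q
        proof
          show "snd q \<noteq> l1" using that vs(2)[of q] lw(1) by auto
          show "{l1, snd q} \<notin> E"
          proof
            assume "{l1, snd q} \<in> E"
            then have "{l1, snd q} = {l1, w}" using leaf_edge[OF sg lw(2)] by auto
            then have "snd q = w" using \<open>snd q \<noteq> l1\<close> by (auto simp: doubleton_eq_iff)
            then show False using that vs(6)[of q] \<open>l2 \<noteq> w\<close> by (cases q) auto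
          qed
        qed
        moreover have "l1 \<notin> fst ` set (s' @ [(w, l2)])" using vs(1) \<open>l1 \<noteq> w\<close> by auto
        ultimately show ?thesis using e1 g2 by simp
      qed
      have K: "Kval E (insert w Q) \<le> Kval E' Q + 2"
      proof -
        have "{e\<in>E. e \<inter> insert w Q = {}} \<subseteq> {e\<in>E'. e \<inter> Q = {}}" by (auto simp: E'_def)
        then have "card {e\<in>E. e \<inter> insert w Q = {}} \<le> card {e\<in>E'. e \<inter> Q = {}}"
          by (intro card_mono) auto
        moreover have "card (insert w Q) \<le> card Q + 1" by (simp add: card_insert_if)
        ultimately show ?thesis by (simp add: Kval_def)
      qed
      show ?thesis using g3 s'(2) K
        by (intro exI[of _ "(l1, w) # s' @ [(w, l2)]"] exI[of _ "insert w Q"]) simp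
    qed
  qed
qed


lemma good_distinct: "good E s \<Longrightarrow> distinct (map fst s)"
  by (induction s) auto

lemma good_index: "good E s \<Longrightarrow> a < b \<Longrightarrow> b < length s \<Longrightarrow>
    snd (s ! b) \<noteq> fst (s ! a) \<and> {fst (s ! a), snd (s ! b)} \<notin> E"
proof (induction s arbitrary: a b)
  case (Cons p s)
  then obtain b' where b: "b = Suc b'" by (cases b) auto
  show ?case
  proof (cases a)
    case 0
    then show ?thesis using Cons.prems b by auto
  next
    case (Suc a')
    then show ?thesis using Cons b by auto
  qed
qed simp

lemma good_inj_snd: "good E s \<Longrightarrow> inj_on snd (set s)"
proof (rule inj_onI, rule ccontr)
  fix x y assume g: "good E s" and xy: "x \<in> set s" "y \<in> set s" "snd x = snd y" "x \<noteq> y"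
  have ex: "{fst x, snd x} \<in> E" "{fst y, snd y} \<in> E" using good_edge[OF g xy(1)] good_edge[OF g xy(2)] by auto
  have "{fst x, snd y} \<in> E" using ex(1) xy(3) by simp
  moreover have "{fst y, snd x} \<in> E" using ex(2) xy(3) by simp
  ultimately show False using good_pair[OF g xy(1,2,4)] by auto
qed

lemma good_inj_fst: "good E s \<Longrightarrow> inj_on fst (set s)"
  using good_distinct distinct_map by blast

lemma nu2_upper:
  fixes E :: "'v::finite set set"
  assumes "two_matching E M"
  shows "card M \<le> Kval E Q"
proof -
  have MsubE: "M \<subseteq> E" using assms by (simp add: two_matching_def)
  have deg: "card {e \<in> M. q \<in> e} \<le> 2" for q using assms by (simp add: two_matching_def)
  have "card M = card ({e\<in>M. e \<inter> Q \<noteq> {}} \<union> {e\<in>M. e \<inter> Q = {}})"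
    by (rule arg_cong[where f=card]) blast
  also have "\<dots> \<le> card {e\<in>M. e \<inter> Q \<noteq> {}} + card {e\<in>M. e \<inter> Q = {}}"
    by (rule card_Un_le)
  finally have c1: "card M \<le> card {e\<in>M. e \<inter> Q \<noteq> {}} + card {e\<in>M. e \<inter> Q = {}}" .
  have c2: "card {e\<in>M. e \<inter> Q = {}} \<le> card {e\<in>E. e \<inter> Q = {}}"
    by (rule card_mono) (use MsubE in auto)
  have "{e\<in>M. e \<inter> Q \<noteq> {}} \<subseteq> (\<Union>q\<in>Q. {e \<in> M. q \<in> e})" by blast
  then have "card {e\<in>M. e \<inter> Q \<noteq> {}} \<le> card (\<Union>q\<in>Q. {e \<in> M. q \<in> e})"
    by (rule card_mono[rotated]) simp
  also have "\<dots> \<le> (\<Sum>q\<in>Q. card {e \<in> M. q \<in> e})" by (rule card_UN_le) simp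
  also have "\<dots> \<le> (\<Sum>q\<in>Q. 2)" by (rule sum_mono) (rule deg)
  finally have c3: "card {e\<in>M. e \<inter> Q \<noteq> {}} \<le> 2 * card Q" by simp
  show ?thesis using c1 c2 c3 unfolding Kval_def by linarith
qed

lemma nu2_le_Kval:
  fixes E :: "'v::finite set set"
  shows "nu2 E \<le> Kval E Q"
proof -
  have "{} \<in> {M. two_matching E M}" by (simp add: two_matching_def)
  then show ?thesis unfolding nu2_def
    using nu2_upper by (subst Max_le_iff) auto
qed

lemma card_le1_inj:
  assumes "inj_on f A" "finite A"
  shows "card {x\<in>A. f x = v} \<le> 1"
proof -
  have "\<forall>a\<in>{x\<in>A. f x = v}. \<forall>b\<in>{x\<in>A. f x = v}. a = b"
    using assms(1) by (auto dest: inj_onD)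
  then show ?thesis using card_le_Suc0_iff_eq[of "{x\<in>A. f x = v}"] assms(2) by auto
qed

lemma nu2_lower:
  fixes E :: "'v::finite set set"
  assumes g: "good E s"
  shows "length s \<le> nu2 E"
proof -
  define M where "M = (\<lambda>x. {fst x, snd x}) ` set s"
  have ds: "distinct s" using good_distinct[OF g] by (simp add: distinct_map)
  have inj: "inj_on (\<lambda>x. {fst x, snd x}) (set s)"
  proof (rule inj_onI, rule ccontr)
    fix x y assume xy: "x \<in> set s" "y \<in> set s" "{fst x, snd x} = {fst y, snd y}" "x \<noteq> y"
    have "fst x \<noteq> fst y" using good_inj_fst[OF g] xy by (auto dest: inj_onD)
    then have "fst x = snd y" "snd x = fst y" using xy(3) by (auto simp: doubleton_eq_iff)
    then show False using good_pair[OF g xy(1,2,4)] by auto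
  qed
  have cM: "card M = length s" unfolding M_def using card_image[OF inj] distinct_card[OF ds] by simp
  have "two_matching E M"
    unfolding two_matching_def
  proof (intro conjI allI)
    show "M \<subseteq> E" using good_edge[OF g] by (auto simp: M_def)
    fix v
    have "{e \<in> M. v \<in> e} \<subseteq> (\<lambda>x. {fst x, snd x}) ` ({x\<in>set s. fst x = v} \<union> {x\<in>set s. snd x = v})"
      by (auto simp: M_def)
    then have "card {e \<in> M. v \<in> e} \<le> card ((\<lambda>x. {fst x, snd x}) ` ({x\<in>set s. fst x = v} \<union> {x\<in>set s. snd x = v}))"
      by (intro card_mono) auto
    also have "\<dots> \<le> card ({x\<in>set s. fst x = v} \<union> {x\<in>set s. snd x = v})"
      by (rule card_image_le) auto
    also have "\<dots> \<le> card {x\<in>set s. fst x = v} + card {x\<in>set s. snd x = v}" by (rule card_Un_le)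
    also have "\<dots> \<le> 1 + 1"
      using card_le1_inj[OF good_inj_fst[OF g]] card_le1_inj[OF good_inj_snd[OF g]] by (intro add_mono) auto
    finally show "card {e \<in> M. v \<in> e} \<le> 2" by simp
  qed
  then have "length s \<in> card ` {M. two_matching E M}" using cM by (metis (mono_tags) image_eqI mem_Collect_eq)
  then show ?thesis unfolding nu2_def by (intro Max_ge) auto
qed

lemma partA:
  fixes E :: "'v::{finite,linorder} set set"
  assumes sg: "simple_graph E" and g: "good E s"
  shows "critical_ideal E (length s) = UNIV"
proof -
  let ?j = "length s"
  define rl where "rl = map fst s"
  define cl where "cl = map snd s"
  have drl: "distinct rl" using good_distinct[OF g] by (simp add: rl_def)
  have dcl: "distinct cl" using good_inj_snd[OF g] good_distinct[OF g] by (simp add: cl_def distinct_map)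
  have "\<exists>z::int. (z = 1 \<or> z = -1) \<and> minor (gen_laplacian E) (set rl) (set cl) = of_int z * (-1) ^ ?j"
  proof (rule minor_triangular[OF drl dcl])
    fix a b assume ab: "a < ?j" "b < ?j" "a < b"
    then show "gen_laplacian E (rl ! a) (cl ! b) = 0"
      using good_index[OF g ab(3) ab(2)] by (auto simp: rl_def cl_def gen_laplacian_def insert_commute)
  next
    fix a assume a: "a < ?j"
    have "{fst (s!a), snd (s!a)} \<in> E" using good_edge[OF g] a by auto
    moreover then have "fst (s!a) \<noteq> snd (s!a)" using irrefl_edge[OF sg] by auto
    ultimately show "gen_laplacian E (rl ! a) (cl ! a) = -1"
      using a by (simp add: rl_def cl_def gen_laplacian_def)
  qed (simp_all add: rl_def cl_def)
  then obtain z :: int where z: "z = 1 \<or> z = -1" and m: "minor (gen_laplacian E) (set rl) (set cl) = of_int z * (-1) ^ ?j"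
    by blast
  define m where "m = minor (gen_laplacian E) (set rl) (set cl)"
  have mm: "m * m = 1"
  proof -
    have "m * m = of_int (z * z) * ((-1) ^ ?j * (-1) ^ ?j)" using m by (simp add: m_def mult_ac)
    also have "(-1::'v zpoly) ^ ?j * (-1) ^ ?j = 1" by (simp flip: power_add)
    finally show ?thesis using z by auto
  qed
  have c1: "card (set rl) = ?j" using distinct_card[OF drl] unfolding rl_def by simp
  have c2: "card (set cl) = ?j" using distinct_card[OF dcl] unfolding cl_def by simp
  have mmin: "m \<in> minors (gen_laplacian E) ?j"
    unfolding minors_def m_def using c1 c2 by blast
  have "p \<in> ideal_gen (minors (gen_laplacian E) ?j)" for p
    unfolding ideal_gen_def
    using mmin mm by (intro CollectI exI[of _ "{m}"] exI[of _ "\<lambda>_. p * m"]) (simp add: mult.assoc)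
  then show ?thesis unfolding critical_ideal_def by blast
qed


definition fsgn :: "'v::linorder set \<Rightarrow> 'v \<Rightarrow> int" where
  "fsgn e u = (if u = Min e then 1 else if u = Max e then -1 else 0)"

lemma fsgn_props:
  fixes e :: "'v::linorder set"
  assumes "card e = 2"
  shows "u \<notin> e \<Longrightarrow> fsgn e u = 0"
    and "u \<in> e \<Longrightarrow> fsgn e u * fsgn e u = 1"
    and "u \<in> e \<Longrightarrow> v \<in> e \<Longrightarrow> u \<noteq> v \<Longrightarrow> fsgn e u * fsgn e v = -1"
proof -
  obtain x y where e: "e = {x, y}" "x \<noteq> y" using assms by (auto simp: card_2_iff)
  have mm: "Min e = min x y" "Max e = max x y" using e by auto
  show "u \<notin> e \<Longrightarrow> fsgn e u = 0" using e unfolding fsgn_def mm by (auto simp: min_def max_def)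
  show "u \<in> e \<Longrightarrow> fsgn e u * fsgn e u = 1" using e unfolding fsgn_def mm by (auto simp: min_def max_def)
  show "u \<in> e \<Longrightarrow> v \<in> e \<Longrightarrow> u \<noteq> v \<Longrightarrow> fsgn e u * fsgn e v = -1"
    using e unfolding fsgn_def mm by (auto simp: min_def max_def)
qed

lemma sum_T3:
  assumes "finite S" "finite Q"
  shows "(\<Sum>t\<in>Inl ` S \<union> Inr ` (Inl ` Q \<union> Inr ` Q). g t) =
     (\<Sum>e\<in>S. g (Inl e)) + (\<Sum>q\<in>Q. g (Inr (Inl q))) + (\<Sum>q\<in>Q. g (Inr (Inr q)))"
proof -
  have "(\<Sum>t\<in>Inl ` S \<union> Inr ` (Inl ` Q \<union> Inr ` Q). g t) = (\<Sum>t\<in>Inl ` S. g t) + (\<Sum>t\<in>Inr ` (Inl ` Q \<union> Inr ` Q). g t)"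
    by (rule sum.union_disjoint) (use assms in auto)
  also have "(\<Sum>t\<in>Inl ` S. g t) = (\<Sum>e\<in>S. g (Inl e))" by (simp add: sum.reindex)
  also have "(\<Sum>t\<in>Inr ` (Inl ` Q \<union> Inr ` Q). g t) = (\<Sum>x\<in>Inl ` Q \<union> Inr ` Q. g (Inr x))"
    by (simp add: sum.reindex)
  also have "\<dots> = (\<Sum>x\<in>Inl ` Q. g (Inr x)) + (\<Sum>x\<in>Inr ` Q. g (Inr x))"
    by (rule sum.union_disjoint) (use assms in auto)
  also have "(\<Sum>x\<in>Inl ` Q. g (Inr x)) = (\<Sum>q\<in>Q. g (Inr (Inl q)))" by (simp add: sum.reindex)
  also have "(\<Sum>x\<in>Inr ` Q. g (Inr x)) = (\<Sum>q\<in>Q. g (Inr (Inr q)))" by (simp add: sum.reindex)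
  finally show ?thesis by (simp add: add.assoc)
qed

lemma card_T3:
  assumes "finite S" "finite Q"
  shows "card (Inl ` S \<union> Inr ` (Inl ` Q \<union> Inr ` Q)) = card S + 2 * card Q"
proof -
  have "card (Inl ` S \<union> Inr ` (Inl ` Q \<union> Inr ` Q)) = card (Inl ` S :: ('a + ('b + 'b)) set) + card (Inr ` (Inl ` Q \<union> Inr ` Q) :: ('a + ('b + 'b)) set)"
    by (rule card_Un_disjoint) (use assms in auto)
  also have "card (Inr ` (Inl ` Q \<union> Inr ` Q) :: ('a + ('b + 'b)) set) = card (Inl ` Q \<union> Inr ` Q)" by (simp add: card_image)
  also have "\<dots> = card (Inl ` Q :: ('b + 'b) set) + card (Inr ` Q :: ('b + 'b) set)"
    by (rule card_Un_disjoint) (use assms in auto)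
  finally show ?thesis by (simp add: card_image)
qed

lemma partB:
  fixes E :: "'v::{finite,linorder} set set"
  assumes sg: "simple_graph E" and jK: "Kval E Q < j"
  shows "critical_ideal E j \<noteq> UNIV"
proof
  assume U: "critical_ideal E j = UNIV"
  define S where "S = {e\<in>E. e \<inter> Q = {}}"
  have S2: "card e = 2" if "e \<in> S" for e using sg that by (auto simp: S_def simple_graph_def)
  define a where "a v = (if v \<in> Q then 0 else int (card {e\<in>S. v \<in> e}))" for v
  define A where "A u v = evalp a (gen_laplacian E u v)" for u v
  have Aeq: "A u v = (if u = v then a u else - (if {u, v} \<in> E then 1 else 0))" for u v
    by (auto simp: A_def gen_laplacian_def evalp_uminus)
  define T :: "('v set + 'v + 'v) set" where "T = Inl ` S \<union> Inr ` (Inl ` Q \<union> Inr ` Q)"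
  define bt where "bt t u = (case t of Inl e \<Rightarrow> fsgn e u | Inr (Inl q) \<Rightarrow> (if u = q then 1 else 0)
      | Inr (Inr q) \<Rightarrow> (if u \<notin> Q then A u q else 0))" for t u
  define ct where "ct t v = (case t of Inl e \<Rightarrow> fsgn e v | Inr (Inl q) \<Rightarrow> A q v
      | Inr (Inr q) \<Rightarrow> (if v = q then 1 else 0))" for t v
  have decomp: "A u v = (\<Sum>t\<in>T. bt t u * ct t v)" for u v
  proof -
    have "(\<Sum>t\<in>T. bt t u * ct t v) = (\<Sum>e\<in>S. fsgn e u * fsgn e v)
        + (\<Sum>q\<in>Q. (if u = q then 1 else 0) * A q v) + (\<Sum>q\<in>Q. (if u \<notin> Q then A u q else 0) * (if v = q then 1 else 0))"
      unfolding T_def by (subst sum_T3) (auto simp: bt_def ct_def)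
    also have "\<dots> = A u v"
    proof (cases "u \<in> Q")
      case True
      have "(\<Sum>e\<in>S. fsgn e u * fsgn e v) = 0"
        using True fsgn_props(1)[OF S2] by (intro sum.neutral) (auto simp: S_def)
      moreover have "(\<Sum>q\<in>Q. (if u = q then 1 else 0) * A q v) = (\<Sum>q\<in>Q. if u = q then A q v else 0)"
        by (intro sum.cong) auto
      moreover have "(\<Sum>q\<in>Q. if u = q then A q v else 0) = A u v"
        using True by (simp add: sum.delta)
      ultimately show ?thesis using True by simp
    next
      case uQ: False
      show ?thesis
      proof (cases "v \<in> Q")
        case True
        have "(\<Sum>e\<in>S. fsgn e u * fsgn e v) = 0"
          using True fsgn_props(1)[OF S2] by (intro sum.neutral) (auto simp: S_def)
        moreover have "(\<Sum>q\<in>Q. (if u = q then 1 else 0) * A q v) = 0"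
          using uQ by (intro sum.neutral) auto
        moreover have "(\<Sum>q\<in>Q. (if u \<notin> Q then A u q else 0) * (if v = q then 1 else 0)) = (\<Sum>q\<in>Q. if v = q then A u q else 0)"
          using uQ by (intro sum.cong) auto
        moreover have "(\<Sum>q\<in>Q. if v = q then A u q else 0) = A u v"
          using True by (simp add: sum.delta)
        ultimately show ?thesis by simp
      next
        case vQ: False
        have z2: "(\<Sum>q\<in>Q. (if u = q then 1 else 0) * A q v) = 0"
          using uQ by (intro sum.neutral) auto
        have z3: "(\<Sum>q\<in>Q. (if u \<notin> Q then A u q else 0) * (if v = q then 1 else 0)) = 0"
          using vQ by (intro sum.neutral) auto
        have "(\<Sum>e\<in>S. fsgn e u * fsgn e v) = A u v"
        proof (cases "u = v")
          case True
          have "(\<Sum>e\<in>S. fsgn e u * fsgn e v) = (\<Sum>e\<in>S. if u \<in> e then 1 else 0)"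
            using True fsgn_props(1,2)[OF S2] by (intro sum.cong) auto
          also have "\<dots> = int (card {e\<in>S. u \<in> e})"
            by (simp add: sum.If_cases Int_def)
          finally show ?thesis using True uQ by (simp add: Aeq a_def)
        next
          case False
          have "(\<Sum>e\<in>S. fsgn e u * fsgn e v) = (\<Sum>e\<in>S. if e = {u, v} then -1 else 0)"
          proof (intro sum.cong refl)
            fix e assume e: "e \<in> S"
            show "fsgn e u * fsgn e v = (if e = {u, v} then -1 else 0)"
            proof (cases "u \<in> e \<and> v \<in> e")
              case True
              have "{u, v} = e"
                by (rule card_subset_eq) (use True False S2[OF e] in \<open>auto simp: card_ge_0_finite\<close>)
              then show ?thesis using fsgn_props(3)[OF S2[OF e]] True False by auto
            next
              case nb: False
              then have "e \<noteq> {u, v}" by auto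
              then show ?thesis using nb fsgn_props(1)[OF S2[OF e]] by auto
            qed
          qed
          also have "\<dots> = (if {u, v} \<in> S then -1 else 0)"
            by (simp add: sum.delta')
          also have "\<dots> = A u v" using False uQ vQ by (auto simp: Aeq S_def)
          finally show ?thesis .
        qed
        then show ?thesis using z2 z3 by simp
      qed
    qed
    finally show ?thesis by simp
  qed
  have finT: "finite T" by (simp add: T_def)
  have cardT: "card T = Kval E Q"
    unfolding T_def Kval_def S_def by (subst card_T3) auto
  obtain h where h: "bij_betw h {0..<card T} T" using ex_bij_betw_nat_finite[OF finT] by blast
  have decomp2: "A u v = (\<Sum>i<card T. bt (h i) u * ct (h i) v)" for u v
    unfolding decomp using sum.reindex_bij_betw[OF h, of "\<lambda>t. bt t u * ct t v"]
    by (simp add: atLeast0LessThan)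
  have zero: "minor A R C = 0" if "card R = j" for R C
    by (rule minor_lowrank[OF decomp2 that]) (use jK cardT in simp)
  have "1 \<in> critical_ideal E j" using U by simp
  then obtain F c where F: "finite F" "F \<subseteq> minors (gen_laplacian E) j" "1 = (\<Sum>g\<in>F. c g * g)"
    unfolding critical_ideal_def ideal_gen_def by blast
  have "evalp a g = 0" if gF: "g \<in> F" for g
  proof -
    obtain R C where "g = minor (gen_laplacian E) R C" "card R = j" "card C = j"
      using F(2) gF unfolding minors_def by blast
    then show ?thesis using zero[of R C] by (simp add: evalp_minor A_def[abs_def])
  qed
  then have "evalp a (\<Sum>g\<in>F. c g * g) = 0" by (simp add: evalp_sum evalp_mult)
  then show False using F(3) by (metis evalp_one zero_neq_one)
qed

theorem theorem3p8:
  fixes E :: "'v::{finite,linorder} set set"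
  assumes "is_tree E"
  shows "algebraic_corank E = nu2 E"
proof -
  have sg: "simple_graph E" and ac: "\<nexists>xs. is_cycle E xs" using assms by (auto simp: is_tree_def)
  obtain s Q where s: "good E s" "Kval E Q \<le> length s" using comb[OF sg ac] by blast
  have A: "critical_ideal E (length s) = UNIV" by (rule partA[OF sg s(1)])
  have B: "critical_ideal E j \<noteq> UNIV" if "length s < j" for j
    by (rule partB[OF sg, of Q]) (use s(2) that in simp)
  have "nu2 E = length s" using nu2_lower[OF s(1)] nu2_le_Kval[of E Q] s(2) by simp
  moreover have "algebraic_corank E = length s"
    unfolding algebraic_corank_def
  proof (rule Greatest_equality)
    show "critical_ideal E (length s) = UNIV" by (rule A)
    fix y assume "critical_ideal E y = UNIV"
    then show "y \<le> length s" using B by (meson not_le)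
  qed
  ultimately show ?thesis by simp
qed

end
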